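(* Let $\gamma\in\Gamma_m(r,s,n)$ be connected (its underlying graph on $[n]$ is connected). Then there exist $n-1$ distinct edges $f_1,\dots,f_{n-1}$ of $E_1$ and an enumeration $[n]=\{v_0,v_1,\dots,v_{n-1}\}$ of the vertices such that, for every $\ell=1,\dots,n-1$: (1) $f_\ell$ is (the underlying edge of) a step of the walk $w_{v_\ell}(\gamma)$; and (2) there exists $j<\ell$ such that $f_\ell$ is also (the underlying edge of) a step of the walk $w_{v_j}(\gamma)$.
   Context: Fix positive integers $r,s,n$ with $s\mid r$. $\Gamma_m(r,s,n)$ is the set of decorated graphs on vertex set $[n]=\{1,\dots,n\}$ with an ordered list of $m$ edges $E=(e_1,\dots,e_m)$, each edge a multiset $\{i,j\}$ with $i,j\in[n]$ (self-edges and repeated edges allowed; edges at different positions are distinct), with integer labels $\kappa(e)$ satisfying $0\le\kappa(e)<r$ for $e\in E_1$ and $0<\kappa(e)<r/s$ for $e\in E_2$, where $E_1$ (resp. $E_2$) is the sublist of edges with two distinct vertices (resp. self-edges). A directed edge $\vec e=(i_0,i_1)$ is an edge $\{i_0,i_1\}$ with an order on its vertices. For $i\in[n]$ the ordered walk $w_i(\gamma)$ is defined recursively: set $i_0=i$; let $s_1$ be the first edge in $E$ containing $i_0$, with step $\vec s_1=(i_0,i_1)$ where $i_1$ is its other vertex ($i_1=i_0$ for a self-edge); let $s_2$ be the first edge after $s_1$ in $E$ containing $i_1$, with step $(i_1,i_2)$; and so on until no later edge contains the current vertex. The walk $w_i(\gamma)$ is the resulting sequence of steps. *)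

theory Defs
  imports Main
begin

text \<open>A decorated graph with m edges on vertex set [n] = {1..n} is represented by
  a list E of length m of vertex pairs (the edge at position k is the multiset
  {fst (E!k), snd (E!k)}; edges are identified by their position k < m) together
  with a labelling kappa of positions.\<close>

type_synonym edge = "nat \<times> nat"

definition is_self_edge :: "edge \<Rightarrow> bool" where
  "is_self_edge e \<longleftrightarrow> fst e = snd e"

definition in_Gamma :: "nat \<Rightarrow> nat \<Rightarrow> nat \<Rightarrow> nat \<Rightarrow> edge list \<Rightarrow> (nat \<Rightarrow> int) \<Rightarrow> bool" where
  "in_Gamma m r s n E kappa \<longleftrightarrow>
     length E = m \<and>
     (\<forall>k<m. fst (E!k) \<in> {1..n} \<and> snd (E!k) \<in> {1..n}) \<and>
     (\<forall>k<m. \<not> is_self_edge (E!k) \<longrightarrow> 0 \<le> kappa k \<and> kappa k < int r) \<and>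
     (\<forall>k<m. is_self_edge (E!k) \<longrightarrow> 0 < kappa k \<and> kappa k < int (r div s))"

function walk :: "edge list \<Rightarrow> nat \<Rightarrow> nat \<Rightarrow> (nat \<times> nat \<times> nat) list" where
  "walk E v k =
     (if length E \<le> k then []
      else if fst (E!k) = v \<or> snd (E!k) = v then
        (let w = (if fst (E!k) = v then snd (E!k) else fst (E!k))
         in (k, v, w) # walk E w (Suc k))
      else walk E v (Suc k))"
  by pat_completeness auto
termination by (relation "measure (\<lambda>(E, v, k). length E - k)") auto

definition ordered_walk :: "edge list \<Rightarrow> nat \<Rightarrow> (nat \<times> nat \<times> nat) list" where
  "ordered_walk E i = walk E i 0"

definition walk_edges :: "edge list \<Rightarrow> nat \<Rightarrow> nat set" where
  "walk_edges E i = fst ` set (ordered_walk E i)"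

definition adj :: "edge list \<Rightarrow> (nat \<times> nat) set" where
  "adj E = {(a, b). \<exists>k<length E. E!k = (a, b) \<or> E!k = (b, a)}"

definition connected_graph :: "nat \<Rightarrow> edge list \<Rightarrow> bool" where
  "connected_graph n E \<longleftrightarrow> (\<forall>u\<in>{1..n}. \<forall>v\<in>{1..n}. (u, v) \<in> (adj E)\<^sup>*)"

end

theory Submission
  imports Defs
begin

definition stp :: "edge \<Rightarrow> nat \<Rightarrow> nat" where
  "stp e x = (if x = fst e then snd e else if x = snd e then fst e else x)"

definition run :: "edge list \<Rightarrow> nat \<Rightarrow> nat \<Rightarrow> nat \<Rightarrow> nat" where
  "run E t k x = fold (\<lambda>i y. stp (E!i) y) [t..<k] x"

definition touches :: "edge \<Rightarrow> nat \<Rightarrow> bool" where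
  "touches e y \<longleftrightarrow> fst e = y \<or> snd e = y"

lemma run_same[simp]: "run E t t x = x"
  by (simp add: run_def)

lemma run_forward: "t < k \<Longrightarrow> run E t k x = run E (Suc t) k (stp (E!t) x)"
  by (simp add: run_def upt_conv_Cons)

lemma run_back: "t \<le> k \<Longrightarrow> run E t (Suc k) x = stp (E!k) (run E t k x)"
  by (simp add: run_def)

lemma stp_inv[simp]: "stp e (stp e x) = x"
  by (auto simp: stp_def)

lemma run_inj: "run E 0 k x = run E 0 k y \<Longrightarrow> x = y"
proof (induction k)
  case 0 then show ?case by simp
next
  case (Suc k)
  then have "stp (E!k) (run E 0 k x) = stp (E!k) (run E 0 k y)" by (simp add: run_back)
  then have "run E 0 k x = run E 0 k y" by (metis stp_inv)
  then show ?case using Suc by simp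
qed

lemma run_surj: "\<exists>x. run E 0 k x = y"
proof (induction k arbitrary: y)
  case 0 then show ?case by simp
next
  case (Suc k)
  obtain x where "run E 0 k x = stp (E!k) y" using Suc by blast
  then show ?case by (metis run_back stp_inv le0)
qed

declare walk.simps[simp del]

lemma walk_nil: "length E \<le> k \<Longrightarrow> walk E v k = []"
  by (subst walk.simps) simp

lemma walk_cons: "k < length E \<Longrightarrow> touches (E!k) v \<Longrightarrow> walk E v k = (k, v, stp (E!k) v) # walk E (stp (E!k) v) (Suc k)"
  by (subst walk.simps) (auto simp: stp_def touches_def Let_def)

lemma walk_skip: "k < length E \<Longrightarrow> \<not> touches (E!k) v \<Longrightarrow> walk E v k = walk E v (Suc k)"
  by (subst walk.simps) (auto simp: touches_def)

lemma stp_skip: "\<not> touches e v \<Longrightarrow> stp e v = v"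
  by (auto simp: stp_def touches_def)

lemma walk_char: "i \<in> fst ` set (walk E x t) \<longleftrightarrow> t \<le> i \<and> i < length E \<and> touches (E!i) (run E t i x)"
proof (induction "length E - t" arbitrary: x t)
  case 0
  then show ?case by (simp add: walk_nil)
next
  case (Suc d)
  then have tl: "t < length E" by simp
  have IH: "\<And>y. i \<in> fst ` set (walk E y (Suc t)) \<longleftrightarrow> Suc t \<le> i \<and> i < length E \<and> touches (E!i) (run E (Suc t) i y)"
    using Suc by simp
  have rf: "t \<le> i \<and> i < length E \<and> touches (E!i) (run E t i x) \<longleftrightarrow>
      (i = t \<and> touches (E!t) x) \<or> (Suc t \<le> i \<and> i < length E \<and> touches (E!i) (run E (Suc t) i (stp (E!t) x)))"
  proof (cases "i = t")
    case True then show ?thesis using tl by simp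
  next
    case False
    show ?thesis
    proof (cases "t < i")
      case True then show ?thesis using run_forward[of t i E x] False by simp
    qed (use False in simp)
  qed
  show ?case
  proof (cases "touches (E!t) x")
    case True
    show ?thesis unfolding rf walk_cons[OF tl True] using IH[of "stp (E!t) x"] True by auto
  next
    case False
    show ?thesis unfolding rf walk_skip[OF tl False] using IH[of x] False stp_skip[OF False] by auto
  qed
qed

lemma walk_edges_char: "i \<in> walk_edges E p \<longleftrightarrow> i < length E \<and> touches (E!i) (run E 0 i p)"
  by (simp add: walk_edges_def ordered_walk_def walk_char)


lemma stp_S: "fst e \<in> S \<Longrightarrow> snd e \<in> S \<Longrightarrow> stp e y \<in> S \<longleftrightarrow> y \<in> S"
  by (auto simp: stp_def)

lemma run_S:
  assumes "\<forall>i<length E. fst (E!i) \<in> S \<and> snd (E!i) \<in> S"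
  shows "k \<le> length E \<Longrightarrow> run E 0 k x \<in> S \<longleftrightarrow> x \<in> S"
proof (induction k)
  case 0 then show ?case by simp
next
  case (Suc k)
  then have "k < length E" by simp
  then show ?case using Suc assms stp_S[of "E!k" S "run E 0 k x"] by (simp add: run_back)
qed

lemma run_A:
  assumes "\<forall>i<length E. \<not> is_self_edge (E!i) \<longrightarrow>
      (\<forall>p q. touches (E!i) (run E 0 i p) \<and> touches (E!i) (run E 0 i q) \<longrightarrow> (p \<in> A \<longleftrightarrow> q \<in> A))"
  shows "k \<le> length E \<Longrightarrow> run E 0 k x \<in> A \<longleftrightarrow> x \<in> A"
proof (induction k arbitrary: x)
  case 0 then show ?case by simp
next
  case (Suc k)
  then have k: "k < length E" by simp
  have IH: "\<And>x. run E 0 k x \<in> A \<longleftrightarrow> x \<in> A" using Suc by simp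
  obtain a b where e: "E!k = (a,b)" by fastforce
  obtain pa where pa: "run E 0 k pa = a" using run_surj by blast
  obtain pb where pb: "run E 0 k pb = b" using run_surj by blast
  have ab: "a \<in> A \<longleftrightarrow> b \<in> A"
  proof (cases "a = b")
    case False
    then have "pa \<in> A \<longleftrightarrow> pb \<in> A" using assms k e pa pb by (simp add: is_self_edge_def touches_def)
    then show ?thesis using IH pa pb by metis
  qed simp
  have "stp (E!k) y \<in> A \<longleftrightarrow> y \<in> A" for y using ab e by (auto simp: stp_def)
  then show ?case using IH by (simp add: run_back)
qed

lemma cross_edge:
  assumes "(x,y) \<in> R\<^sup>*" "x \<in> V" "y \<notin> V"
  shows "\<exists>a b. (a,b) \<in> R \<and> a \<in> V \<and> b \<notin> V"
  using assms
proof (induction rule: rtrancl_induct)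
  case base then show ?case by simp
next
  case (step y z)
  then show ?case by (cases "y \<in> V") auto
qed

lemma growth:
  fixes R :: "(nat \<times> nat) set"
  assumes "finite S" "R \<subseteq> S \<times> S" "p0 \<in> S" "\<forall>q\<in>S. (p0,q) \<in> R\<^sup>*"
  shows "0 < k \<Longrightarrow> k \<le> card S \<Longrightarrow> \<exists>v. v 0 = p0 \<and> inj_on v {0..<k} \<and> v ` {0..<k} \<subseteq> S \<and>
      (\<forall>l\<in>{1..<k}. \<exists>j<l. (v j, v l) \<in> R)"
proof (induction k)
  case 0 then show ?case by simp
next
  case (Suc k)
  show ?case
  proof (cases "k = 0")
    case True
    then show ?thesis using assms by (intro exI[of _ "\<lambda>_. p0"]) auto
  next
    case False
    then obtain v where v: "v 0 = p0" "inj_on v {0..<k}" "v ` {0..<k} \<subseteq> S"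
      "\<forall>l\<in>{1..<k}. \<exists>j<l. (v j, v l) \<in> R" using Suc by auto
    let ?V = "v ` {0..<k}"
    have cV: "card ?V = k" using v(2) by (simp add: card_image)
    have "\<not> S \<subseteq> ?V"
    proof
      assume "S \<subseteq> ?V"
      then have "card S \<le> card ?V" by (simp add: card_mono)
      then show False using cV Suc.prems by simp
    qed
    then obtain q where q: "q \<in> S" "q \<notin> ?V" by blast
    have "p0 \<in> ?V" using v(1) False by force
    then obtain a b where ab: "(a,b) \<in> R" "a \<in> ?V" "b \<notin> ?V"
      using cross_edge[of p0 q R ?V] q assms(4) by blast
    then obtain j where j: "j < k" "v j = a" by auto
    define v' where "v' = v(k := b)"
    have eq: "\<And>i. i < k \<Longrightarrow> v' i = v i" by (simp add: v'_def)
    have "inj_on v' {0..<Suc k}"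
    proof -
      have "inj_on v' {0..<k}" using v(2) eq by (simp add: inj_on_def)
      moreover have "v' k \<notin> v' ` {0..<k}" using ab(3) eq by (force simp: v'_def)
      ultimately show ?thesis by (simp add: atLeast0_lessThan_Suc)
    qed
    moreover have "v' ` {0..<Suc k} \<subseteq> S"
      using v(3) ab(1) assms(2) eq by (auto simp: v'_def less_Suc_eq)
    moreover have "\<forall>l\<in>{1..<Suc k}. \<exists>j<l. (v' j, v' l) \<in> R"
    proof
      fix l assume l: "l \<in> {1..<Suc k}"
      show "\<exists>j<l. (v' j, v' l) \<in> R"
      proof (cases "l = k")
        case True
        then show ?thesis using j ab(1) eq by (intro exI[of _ j]) (simp add: v'_def)
      next
        case False
        then have "l \<in> {1..<k}" using l by auto
        then obtain j where "j < l" "(v j, v l) \<in> R" using v(4) by blast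
        then show ?thesis using eq \<open>l \<in> {1..<k}\<close> by (intro exI[of _ j]) auto
      qed
    qed
    moreover have "v' 0 = p0" using v(1) False by (simp add: v'_def)
    ultimately show ?thesis by blast
  qed
qed


lemma three: "touches e x \<Longrightarrow> touches e y \<Longrightarrow> touches e z \<Longrightarrow> x = y \<or> x = z \<or> y = z"
  by (auto simp: touches_def)

theorem mainTheorem8:
  fixes r s n m :: nat and E :: "edge list" and kappa :: "nat \<Rightarrow> int"
  assumes "0 < r" "0 < s" "0 < n" "s dvd r"
    and "in_Gamma m r s n E kappa"
    and "connected_graph n E"
  shows "\<exists>f :: nat \<Rightarrow> nat. \<exists>v :: nat \<Rightarrow> nat.
     inj_on f {1..n-1} \<and>
     (\<forall>l\<in>{1..n-1}. f l < m \<and> \<not> is_self_edge (E ! f l)) \<and>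
     bij_betw v {0..<n} {1..n} \<and>
     (\<forall>l\<in>{1..n-1}. f l \<in> walk_edges E (v l) \<and>
        (\<exists>j<l. f l \<in> walk_edges E (v j)))"
proof -
  define S where "S = {1..n}"
  have mE: "m = length E" using assms(5) by (simp add: in_Gamma_def)
  have endS: "\<forall>i<length E. fst (E!i) \<in> S \<and> snd (E!i) \<in> S" using assms(5) mE by (simp add: in_Gamma_def S_def)
  define R where "R = {(p,q). \<exists>i<length E. \<not> is_self_edge (E!i) \<and> touches (E!i) (run E 0 i p) \<and> touches (E!i) (run E 0 i q)}"
  have tS: "p \<in> S" if "i < length E" "touches (E!i) (run E 0 i p)" for i p
  proof -
    have "run E 0 i p \<in> S" using that endS by (auto simp: touches_def)
    then show ?thesis using run_S[OF endS, of i p] that by simp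
  qed
  have RS: "R \<subseteq> S \<times> S" using tS by (auto simp: R_def)
  define A where "A = {q. (1,q) \<in> R\<^sup>*}"
  have Asm: "\<forall>i<length E. \<not> is_self_edge (E!i) \<longrightarrow>
      (\<forall>p q. touches (E!i) (run E 0 i p) \<and> touches (E!i) (run E 0 i q) \<longrightarrow> (p \<in> A \<longleftrightarrow> q \<in> A))"
  proof (intro allI impI)
    fix i p q assume i: "i < length E" "\<not> is_self_edge (E!i)"
      and t: "touches (E!i) (run E 0 i p) \<and> touches (E!i) (run E 0 i q)"
    have pq: "(p,q) \<in> R" "(q,p) \<in> R" unfolding R_def using i t by blast+
    show "p \<in> A \<longleftrightarrow> q \<in> A"
    proof
      assume "p \<in> A" then show "q \<in> A" unfolding A_def using pq(1) rtrancl.rtrancl_into_rtrancl by fastforce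
    next
      assume "q \<in> A" then show "p \<in> A" unfolding A_def using pq(2) rtrancl.rtrancl_into_rtrancl by fastforce
    qed
  qed
  have adjA: "b \<in> A" if H: "(a,b) \<in> adj E" "a \<in> A" for a b
  proof -
    obtain i where i: "i < length E" "E!i = (a,b) \<or> E!i = (b,a)" using H(1) by (auto simp: adj_def)
    show ?thesis
    proof (cases "a = b")
      case True then show ?thesis using H by simp
    next
      case False
      then have ns: "\<not> is_self_edge (E!i)" using i by (auto simp: is_self_edge_def)
      obtain pa where pa: "run E 0 i pa = a" using run_surj by blast
      obtain pb where pb: "run E 0 i pb = b" using run_surj by blast
      have "touches (E!i) (run E 0 i pa)" "touches (E!i) (run E 0 i pb)" using i pa pb by (auto simp: touches_def)
      then have "pa \<in> A \<longleftrightarrow> pb \<in> A" using Asm i(1) ns by blast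
      moreover have "a \<in> A \<longleftrightarrow> pa \<in> A" using run_A[OF Asm, of i pa] i pa by simp
      moreover have "b \<in> A \<longleftrightarrow> pb \<in> A" using run_A[OF Asm, of i pb] i pb by simp
      ultimately show ?thesis using H by simp
    qed
  qed
  have conn: "\<forall>q\<in>S. (1,q) \<in> R\<^sup>*"
  proof
    fix q assume q: "q \<in> S"
    have "(1,q) \<in> (adj E)\<^sup>*" using assms(6) assms(3) q by (simp add: connected_graph_def S_def)
    then have "q \<in> A"
    proof (induction rule: rtrancl_induct)
      case base then show ?case by (simp add: A_def)
    next
      case (step y z) then show ?case using adjA by blast
    qed
    then show "(1,q) \<in> R\<^sup>*" by (simp add: A_def)
  qed
  have cS: "card S = n" by (simp add: S_def)
  obtain v where v: "v 0 = 1" "inj_on v {0..<n}" "v ` {0..<n} \<subseteq> S"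
      "\<forall>l\<in>{1..<n}. \<exists>j<l. (v j, v l) \<in> R"
    using growth[of S R 1 n] RS conn cS assms(3) by (auto simp: S_def)
  have bij: "bij_betw v {0..<n} {1..n}"
  proof -
    have "card (v ` {0..<n}) = card S" using v(2) cS by (simp add: card_image)
    then have "v ` {0..<n} = S" using v(3) by (simp add: S_def card_subset_eq)
    then show ?thesis using v(2) by (simp add: bij_betw_def S_def)
  qed
  define P where "P l i \<longleftrightarrow> i < length E \<and> \<not> is_self_edge (E!i) \<and> touches (E!i) (run E 0 i (v l)) \<and>
      (\<exists>j<l. touches (E!i) (run E 0 i (v j)))" for l i
  define f where "f l = (SOME i. P l i)" for l
  have Pf: "P l (f l)" if "l \<in> {1..n-1}" for l
  proof -
    have "l \<in> {1..<n}" using that by auto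
    then obtain j where "j < l" "(v j, v l) \<in> R" using v(4) by blast
    then have "\<exists>i. P l i" by (auto simp: R_def P_def)
    then show ?thesis unfolding f_def by (rule someI_ex)
  qed
  have injf: "inj_on f {1..n-1}"
  proof (rule inj_onI)
    have key: "False" if H: "l \<in> {1..n-1}" "l' \<in> {1..n-1}" "l < l'" "f l = f l'" for l l'
    proof -
      obtain j where j: "j < l" "touches (E!(f l)) (run E 0 (f l) (v j))" using Pf[OF H(1)] by (auto simp: P_def)
      have t1: "touches (E!(f l)) (run E 0 (f l) (v l))" using Pf[OF H(1)] by (simp add: P_def)
      have t2: "touches (E!(f l)) (run E 0 (f l) (v l'))" using Pf[OF H(2)] H(4) by (simp add: P_def)
      have in0: "l < n" "l' < n" "j < n" using H j by auto
      have inj': "\<And>x y. v x = v y \<Longrightarrow> x < n \<Longrightarrow> y < n \<Longrightarrow> x = y" using v(2) by (simp add: inj_on_def)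
      have d: "v l \<noteq> v j" "v l \<noteq> v l'" "v j \<noteq> v l'"
        using inj'[of l j] inj'[of l l'] inj'[of j l'] in0 H(3) j(1) by auto
      from three[OF t1 j(2) t2] d show False by (auto dest: run_inj)
    qed
    fix l l' assume "l \<in> {1..n-1}" "l' \<in> {1..n-1}" "f l = f l'"
    then show "l = l'" using key[of l l'] key[of l' l] by (cases "l < l'"; cases "l' < l") auto
  qed
  show ?thesis
  proof (intro exI conjI)
    show "inj_on f {1..n-1}" by (rule injf)
    show "bij_betw v {0..<n} {1..n}" by (rule bij)
    show "\<forall>l\<in>{1..n-1}. f l < m \<and> \<not> is_self_edge (E ! f l)" using Pf mE by (simp add: P_def)
    show "\<forall>l\<in>{1..n-1}. f l \<in> walk_edges E (v l) \<and> (\<exists>j<l. f l \<in> walk_edges E (v j))"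
      using Pf by (auto simp: P_def walk_edges_char)
  qed
qed

end
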